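(* Let $-\pi/2<\alpha<\pi/2$ and $\lambda<1$. For every $f\in\mathcal{S}^*_\alpha(\lambda)$, $\|J[f]\|\le 4(1-\lambda)\cos\alpha$, and this inequality is sharp: equality holds for some $f\in\mathcal{S}^*_\alpha(\lambda)$.
   Context: $\mathbb{D}$ is the open unit disk; $\mathcal{A}$ the class of analytic $f$ on $\mathbb{D}$ with $f(0)=0$, $f'(0)=1$. For $\alpha\in(-\pi/2,\pi/2)$, $\lambda<1$, $\mathcal{S}^*_\alpha(\lambda)=\{f\in\mathcal{A}: f(z)\neq0 \text{ for } z\ne 0,\ \mathrm{Re}\,(e^{i\alpha}zf'(z)/f(z))>\lambda\cos\alpha \text{ on }\mathbb{D}\}$. The Alexander transform is $J[f](z)=\int_0^z f(w)/w\,dw$. For $h\in\mathcal{A}$ with $h'$ nonvanishing on $\mathbb{D}$, the pre-Schwarzian norm is $\|h\|=\sup_{z\in\mathbb{D}}(1-|z|^2)|h''(z)/h'(z)|$. *)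

theory Defs
  imports "HOL-Complex_Analysis.Complex_Analysis" "HOL-Library.Extended_Real"
begin

definition classA :: "(complex \<Rightarrow> complex) set" where
  "classA = {f. f holomorphic_on ball 0 1 \<and> f 0 = 0 \<and> deriv f 0 = 1}"

text \<open>Spirallike class S*_alpha(lambda). The quotient z f'(z)/f(z) is only
  meaningful for z nonzero (its value at 0 is the limit 1); the condition is
  imposed on the punctured disk.\<close>
definition spirallike :: "real \<Rightarrow> real \<Rightarrow> (complex \<Rightarrow> complex) set" where
  "spirallike \<alpha> lam = {f \<in> classA.
      (\<forall>z \<in> ball 0 1. z \<noteq> 0 \<longrightarrow> f z \<noteq> 0) \<and>
      (\<forall>z \<in> ball 0 1. z \<noteq> 0 \<longrightarrow>
          Re (exp (\<i> * of_real \<alpha>) * z * deriv f z / f z) > lam * cos \<alpha>)}"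

text \<open>Alexander transform J[f](z) = integral from 0 to z of f(w)/w dw,
  along the segment (path independent on the disk); the integrand is
  understood with its removable singularity at 0 filled in by f'(0).\<close>
definition alexander :: "(complex \<Rightarrow> complex) \<Rightarrow> complex \<Rightarrow> complex" where
  "alexander f z = contour_integral (linepath 0 z)
       (\<lambda>w. if w = 0 then deriv f 0 else f w / w)"

definition preschwarzian_norm :: "(complex \<Rightarrow> complex) \<Rightarrow> ereal" where
  "preschwarzian_norm h =
     (SUP z \<in> ball 0 1. ereal ((1 - (cmod z)\<^sup>2) *
         cmod (deriv (deriv h) z / deriv h z)))"

end

theory Submission
  imports Defs
begin

lemma alex_basic:
  assumes holf: "f holomorphic_on ball 0 1" and f0: "f 0 = 0"
  defines "G \<equiv> (\<lambda>w. if w = 0 then deriv f 0 else f w / w)"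
  shows "G holomorphic_on ball 0 1"
    and "\<And>z. z \<in> ball 0 1 \<Longrightarrow> deriv (alexander f) z = G z"
    and "\<And>z. z \<in> ball 0 1 \<Longrightarrow> deriv (deriv (alexander f)) z = deriv G z"
proof -
  have GG: "G = (\<lambda>z. if z = 0 then deriv f 0 else (f z - f 0)/(z-0))"
    unfolding G_def using f0 by auto
  show hol: "G holomorphic_on ball 0 1"
    using pole_lemma_open[OF holf open_ball, of 0] by (simp only: GG)
  obtain g where g: "\<And>x. x \<in> ball 0 1 \<Longrightarrow> (g has_field_derivative G x) (at x within ball 0 1)"
    using holomorphic_convex_primitive'[OF convex_ball open_ball hol] by blast
  have alex: "alexander f z = g z - g 0" if "z \<in> ball 0 1" for z
  proof -
    have "closed_segment 0 z \<subseteq> ball 0 1"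
      using that by (simp add: closed_segment_subset convex_ball)
    then have "(G has_contour_integral (g z - g 0)) (linepath 0 z)"
      using contour_integral_primitive[OF g, of "linepath 0 z"] by auto
    then show ?thesis unfolding alexander_def G_def[symmetric]
      by (rule contour_integral_unique)
  qed
  have hd: "(alexander f has_field_derivative G z) (at z)" if "z \<in> ball 0 1" for z
  proof -
    have "(g has_field_derivative G z) (at z)"
      using g[OF that] by (simp add: at_within_open[OF that open_ball])
    then have "((\<lambda>z. g z - g 0) has_field_derivative G z - 0) (at z)"
      by (rule DERIV_diff[OF _ DERIV_const])
    then have "((\<lambda>z. g z - g 0) has_field_derivative G z) (at z)" by simp
    then show ?thesis
      by (rule has_field_derivative_transform_within_open[OF _ open_ball that]) (simp add: alex)
  qed
  show d1: "deriv (alexander f) z = G z" if "z \<in> ball 0 1" for z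
    using hd[OF that] by (rule DERIV_imp_deriv)
  show "deriv (deriv (alexander f)) z = deriv G z" if "z \<in> ball 0 1" for z
  proof (rule deriv_cong_ev)
    show "\<forall>\<^sub>F x in nhds z. deriv (alexander f) x = G x"
    proof -
      have "eventually (\<lambda>x. x \<in> ball 0 1) (nhds z)"
        using that by (intro eventually_nhds_in_open) auto
      then show ?thesis by (rule eventually_mono) (simp add: d1)
    qed
  qed simp
qed


lemma norm_minus_lt_plus:
  fixes q :: complex and c :: real
  assumes "Re q > 0" "c > 0"
  shows "cmod (q - of_real c) < cmod (q + of_real c)"
proof -
  have e1: "(cmod (q - of_real c))^2 = (Re q - c)^2 + (Im q)^2" by (simp add: cmod_power2)
  have e2: "(cmod (q + of_real c))^2 = (Re q + c)^2 + (Im q)^2" by (simp add: cmod_power2)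
  have "(Re q - c)^2 < (Re q + c)^2"
    using mult_pos_pos[OF assms] by (simp add: power2_eq_square algebra_simps)
  then have "(cmod (q - of_real c))^2 < (cmod (q + of_real c))^2"
    unfolding e1 e2 by simp
  then show ?thesis by (simp add: power_less_imp_less_base)
qed

lemma upper_nz:
  assumes f: "f \<in> spirallike \<alpha> lam"
    and a1: "- (pi / 2) < \<alpha>" and a2: "\<alpha> < pi / 2" and l1: "lam < 1"
  defines "G \<equiv> (\<lambda>w. if w = 0 then deriv f 0 else f w / w)"
  assumes z: "z \<in> ball 0 1" and znz: "z \<noteq> 0"
  shows "(1 - (cmod z)^2) * cmod (deriv G z / G z) \<le> 4 * (1 - lam) * cos \<alpha>"
proof -
  have holf: "f holomorphic_on ball 0 1" and f0: "f 0 = 0" and df0: "deriv f 0 = 1"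
    and fnz: "\<And>z. z \<in> ball 0 1 \<Longrightarrow> z \<noteq> 0 \<Longrightarrow> f z \<noteq> 0"
    and re: "\<And>z. z \<in> ball 0 1 \<Longrightarrow> z \<noteq> 0 \<Longrightarrow>
          Re (exp (\<i> * of_real \<alpha>) * z * deriv f z / f z) > lam * cos \<alpha>"
    using f unfolding spirallike_def classA_def by auto
  have holG: "G holomorphic_on ball 0 1"
    unfolding G_def by (rule alex_basic(1)[OF holf f0])
  have G0: "G 0 = 1" by (simp add: G_def df0)
  have Gnz: "G w \<noteq> 0" if "w \<in> ball 0 1" for w
    using fnz[OF that] G0 by (cases "w = 0") (auto simp: G_def)
  have fG: "f w = w * G w" if "w \<in> ball 0 1" for w
    using f0 by (cases "w = 0") (auto simp: G_def)
  have holdG: "deriv G holomorphic_on ball 0 1"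
    by (rule holomorphic_deriv[OF holG open_ball])
  have dG: "(G has_field_derivative deriv G w) (at w)" if "w \<in> ball 0 1" for w
    using holG that by (auto intro!: DERIV_deriv_iff_field_differentiable[THEN iffD2]
          holomorphic_on_imp_differentiable_at)
  have df: "deriv f w = G w + w * deriv G w" if "w \<in> ball 0 1" for w
  proof -
    have "deriv f w = deriv (\<lambda>w. w * G w) w"
    proof (rule deriv_cong_ev)
      have "eventually (\<lambda>x. x \<in> ball 0 1) (nhds w)"
        using that by (intro eventually_nhds_in_open) auto
      then show "\<forall>\<^sub>F x in nhds w. f x = x * G x"
        by (rule eventually_mono) (simp add: fG)
    qed simp
    also have "\<dots> = G w + w * deriv G w"
      by (rule DERIV_imp_deriv) (use dG[OF that] in \<open>auto intro!: derivative_eq_intros\<close>)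
    finally show ?thesis .
  qed
  define p where "p w = 1 + w * deriv G w / G w" for w
  have pz: "w * deriv f w / f w = p w" if "w \<in> ball 0 1" "w \<noteq> 0" for w
    using that Gnz[OF that(1)] by (simp add: df fG p_def field_simps)
  have cpos: "cos \<alpha> > 0" using a1 a2 by (intro cos_gt_zero_pi) auto
  define c where "c = (1 - lam) * cos \<alpha>"
  have c0: "c > 0" using cpos l1 by (simp add: c_def)
  define Q where "Q w = exp (\<i> * of_real \<alpha>) * p w - of_real (lam * cos \<alpha>) - \<i> * of_real (sin \<alpha>)" for w
  have eia: "exp (\<i> * of_real \<alpha>) = of_real (cos \<alpha>) + \<i> * of_real (sin \<alpha>)"
    by (simp add: exp_Euler cos_of_real sin_of_real)
  have p0: "p 0 = 1" by (simp add: p_def)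
  have Q0: "Q 0 = of_real c"
    by (simp add: Q_def p0 eia c_def algebra_simps)
  have ReQ: "Re (Q w) > 0" if "w \<in> ball 0 1" for w
  proof (cases "w = 0")
    case True then show ?thesis using Q0 c0 by simp
  next
    case False
    have "exp (\<i> * of_real \<alpha>) * w * deriv f w / f w = exp (\<i> * of_real \<alpha>) * p w"
      by (simp only: pz[OF that False, symmetric] times_divide_eq_right mult.assoc)
    then have "Re (exp (\<i> * of_real \<alpha>) * p w) > lam * cos \<alpha>"
      using re[OF that False] by simp
    then show ?thesis by (simp add: Q_def)
  qed
  define W where "W w = (Q w - of_real c) / (Q w + of_real c)" for w
  have Qc: "Q w + of_real c \<noteq> 0" if "w \<in> ball 0 1" for w
  proof
    assume "Q w + of_real c = 0"
    then have "Re (Q w) = - c" by (metis add_eq_0_iff2 Re_complex_of_real uminus_complex.sel(1))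
    then show False using ReQ[OF that] c0 by simp
  qed
  have Wlt: "cmod (W w) < 1" if "w \<in> ball 0 1" for w
    using norm_minus_lt_plus[OF ReQ[OF that] c0] Qc[OF that]
    by (simp add: W_def norm_divide divide_less_eq)
  have holp: "p holomorphic_on ball 0 1"
    unfolding p_def[abs_def] using holG holdG Gnz by (auto intro!: holomorphic_intros)
  have holW: "W holomorphic_on ball 0 1"
    unfolding W_def[abs_def] Q_def[abs_def] using holp Qc[unfolded Q_def]
    by (auto intro!: holomorphic_intros)
  have W0: "W 0 = 0" by (simp add: W_def Q0)
  have Wz: "cmod (W z) \<le> cmod z"
    using Schwarz_Lemma(1)[OF holW W0 Wlt] z by auto
  have key: "(Q z - of_real c) * (1 - W z) = 2 * of_real c * W z"
    using Qc[OF z] by (simp add: W_def field_simps)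
  have pq: "exp (\<i> * of_real \<alpha>) * (p z - 1) = Q z - of_real c"
    by (simp add: Q_def eia c_def algebra_simps)
  have nz1: "cmod (z * deriv G z / G z) = cmod (Q z - of_real c)"
  proof -
    have "z * deriv G z / G z = p z - 1" by (simp add: p_def)
    then show ?thesis using arg_cong[OF pq, of cmod] by (simp add: norm_mult)
  qed
  have zlt: "cmod z < 1" using z by simp
  have "cmod (Q z - of_real c) * (1 - cmod z) \<le> cmod (Q z - of_real c) * cmod (1 - W z)"
  proof (rule mult_left_mono)
    have "1 - cmod (W z) \<le> cmod (1 - W z)" using norm_triangle_ineq2[of 1 "W z"] by simp
    then show "1 - cmod z \<le> cmod (1 - W z)" using Wz by linarith
  qed simp
  also have "\<dots> = 2 * c * cmod (W z)"
    using arg_cong[OF key, of cmod] c0 by (simp add: norm_mult)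
  also have "\<dots> \<le> 2 * c * cmod z" using Wz c0 by simp
  finally have A: "cmod (Q z - of_real c) * (1 - cmod z) \<le> 2 * c * cmod z" .
  show ?thesis
  proof -
    note False = znz
    have "cmod z * (cmod (deriv G z / G z) * (1 - cmod z)) \<le> cmod z * (2 * c)"
    proof -
      have "cmod z * cmod (deriv G z / G z) = cmod (Q z - of_real c)"
        using nz1 by (simp add: norm_mult[symmetric])
      then have "cmod z * (cmod (deriv G z / G z) * (1 - cmod z)) = cmod (Q z - of_real c) * (1 - cmod z)"
        by (metis mult.assoc)
      also have "\<dots> \<le> 2 * c * cmod z" by (rule A)
      also have "\<dots> = cmod z * (2 * c)" by simp
      finally show ?thesis .
    qed
    then have B: "cmod (deriv G z / G z) * (1 - cmod z) \<le> 2 * c"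
      using False by simp
    have "(1 - (cmod z)^2) * cmod (deriv G z / G z)
          = (1 + cmod z) * (cmod (deriv G z / G z) * (1 - cmod z))"
      by (simp add: power2_eq_square algebra_simps)
    also have "\<dots> \<le> (1 + cmod z) * (2 * c)"
      by (rule mult_left_mono[OF B]) simp
    also have "\<dots> \<le> 2 * (2 * c)" using zlt c0 by (intro mult_right_mono) auto
    finally show ?thesis by (simp add: c_def algebra_simps)
  qed
qed

lemma upper_pointwise:
  assumes f: "f \<in> spirallike \<alpha> lam"
    and a1: "- (pi / 2) < \<alpha>" and a2: "\<alpha> < pi / 2" and l1: "lam < 1"
  defines "G \<equiv> (\<lambda>w. if w = 0 then deriv f 0 else f w / w)"
  assumes z: "z \<in> ball 0 1"
  shows "(1 - (cmod z)^2) * cmod (deriv G z / G z) \<le> 4 * (1 - lam) * cos \<alpha>"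
proof (cases "z = 0")
  case False
  then show ?thesis using upper_nz[OF f a1 a2 l1 z] unfolding G_def by blast
next
  case True
  have holf: "f holomorphic_on ball 0 1" and f0: "f 0 = 0" and df0: "deriv f 0 = 1"
    and fnz: "\<And>z. z \<in> ball 0 1 \<Longrightarrow> z \<noteq> 0 \<Longrightarrow> f z \<noteq> 0"
    using f unfolding spirallike_def classA_def by auto
  have holG: "G holomorphic_on ball 0 1"
    unfolding G_def by (rule alex_basic(1)[OF holf f0])
  have G0: "G 0 = 1" by (simp add: G_def df0)
  have Gnz: "G w \<noteq> 0" if "w \<in> ball 0 1" for w
    using fnz[OF that] G0 by (cases "w = 0") (auto simp: G_def)
  have holdG: "deriv G holomorphic_on ball 0 1"
    by (rule holomorphic_deriv[OF holG open_ball])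
  define F where "F w = (1 - (cmod w)^2) * cmod (deriv G w / G w)" for w
  have "(\<lambda>w. deriv G w / G w) holomorphic_on ball 0 1"
    using holG holdG Gnz by (intro holomorphic_intros) auto
  then have "continuous_on (ball 0 1) F"
    unfolding F_def[abs_def]
    by (auto intro!: continuous_intros holomorphic_on_imp_continuous_on)
  then have cF: "isCont F 0"
    by (rule continuous_on_interior) simp
  define s where "s n = complex_of_real (1 / (real n + 2))" for n
  have "(\<lambda>n. 1 / (real n + 2)) \<longlonglongrightarrow> 0"
    using LIMSEQ_ignore_initial_segment[OF lim_inverse_n', of 2]
    by (simp add: add.commute divide_inverse)
  from tendsto_of_real[OF this, where 'a=complex] have "s \<longlonglongrightarrow> 0"
    unfolding s_def of_real_0 .
  then have lim: "(\<lambda>n. F (s n)) \<longlonglongrightarrow> F 0"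
    by (rule isCont_tendsto_compose[OF cF])
  have "F (s n) \<le> 4 * (1 - lam) * cos \<alpha>" for n
  proof -
    have "s n \<in> ball 0 1" "s n \<noteq> 0"
      by (auto simp: s_def norm_of_real simp del: of_real_add of_real_divide of_real_1 of_real_of_nat_eq)
    then show ?thesis using upper_nz[OF f a1 a2 l1] unfolding F_def G_def by blast
  qed
  then have "F 0 \<le> 4 * (1 - lam) * cos \<alpha>"
    by (intro LIMSEQ_le_const2[OF lim]) auto
  then show ?thesis using True by (simp add: F_def)
qed


lemma one_minus_not_nonpos:
  assumes "z \<in> ball (0::complex) 1"
  shows "1 - z \<notin> \<real>\<^sub>\<le>\<^sub>0"
proof -
  have "Re z \<le> cmod z" by (rule complex_Re_le_cmod)
  then have "Re (1 - z) > 0" using assms by simp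
  then show ?thesis by (simp add: complex_nonpos_Reals_iff)
qed

lemma Re_frac_pos:
  assumes "cmod z < 1"
  shows "Re ((1 + z) / (1 - z)) > 0"
proof -
  have "z \<noteq> 1" using assms by auto
  then have d: "(cmod (1 - z))^2 > 0" by simp
  have "(Re z)^2 + (Im z)^2 < 1"
    using assms by (metis cmod_power2 norm_ge_zero power_strict_mono pos2 power_one)
  then have "Re (1 + z) * Re (1 - z) + Im (1 + z) * Im (1 - z) > 0"
    by (simp add: power2_eq_square algebra_simps)
  then show ?thesis using d by (simp add: Re_divide cmod_power2 divide_pos_pos)
qed


lemma extremal:
  fixes \<alpha> lam :: real
  assumes a1: "- (pi / 2) < \<alpha>" and a2: "\<alpha> < pi / 2" and l1: "lam < 1"
  defines "c \<equiv> (1 - lam) * cos \<alpha>"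
  defines "b \<equiv> exp (- (\<i> * of_real \<alpha>)) * of_real c"
  defines "G0 \<equiv> (\<lambda>z. exp (- 2 * b * ln (1 - z)))"
  defines "f0 \<equiv> (\<lambda>z. z * G0 z)"
  shows "f0 \<in> spirallike \<alpha> lam"
    and "\<And>r. 0 \<le> r \<Longrightarrow> r < 1 \<Longrightarrow>
      (1 - (cmod (complex_of_real r))^2) *
        cmod (deriv (deriv (alexander f0)) (of_real r) / deriv (alexander f0) (of_real r))
      = 2 * c * (1 + r)"
proof -
  have cpos: "cos \<alpha> > 0" using a1 a2 by (intro cos_gt_zero_pi) auto
  have c0: "c > 0" using cpos l1 by (simp add: c_def)
  have dG0: "(G0 has_field_derivative G0 z * (2 * b / (1 - z))) (at z)" if "z \<in> ball 0 1" for z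
  proof -
    have nn: "1 - z \<notin> \<real>\<^sub>\<le>\<^sub>0" by (rule one_minus_not_nonpos[OF that])
    then have "1 - z \<noteq> 0" by auto
    then show ?thesis unfolding G0_def
      using nn by (auto intro!: derivative_eq_intros simp: field_simps)
  qed
  have holG0: "G0 holomorphic_on ball 0 1"
    using dG0 by (meson field_differentiable_def holomorphic_on_open open_ball)
  have dG0': "deriv G0 z = G0 z * (2 * b / (1 - z))" if "z \<in> ball 0 1" for z
    by (rule DERIV_imp_deriv[OF dG0[OF that]])
  have G00: "G0 0 = 1" by (simp add: G0_def)
  have G0nz: "G0 z \<noteq> 0" for z by (simp add: G0_def)
  have df0: "(f0 has_field_derivative G0 z + z * (G0 z * (2 * b / (1 - z)))) (at z)"
    if "z \<in> ball 0 1" for z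
    unfolding f0_def using dG0[OF that] by (auto intro!: derivative_eq_intros)
  have df0': "deriv f0 z = G0 z + z * (G0 z * (2 * b / (1 - z)))" if "z \<in> ball 0 1" for z
    by (rule DERIV_imp_deriv[OF df0[OF that]])
  have holf0: "f0 holomorphic_on ball 0 1"
    unfolding f0_def using holG0 by (auto intro!: holomorphic_intros)
  have f00: "f0 0 = 0" by (simp add: f0_def)
  have GG: "(\<lambda>w. if w = 0 then deriv f0 0 else f0 w / w) = G0"
    using df0'[of 0] G00 by (auto simp: f0_def)
  have eia: "exp (\<i> * of_real \<alpha>) * b = of_real c"
    by (simp add: b_def exp_minus field_simps)
  show "f0 \<in> spirallike \<alpha> lam"
    unfolding spirallike_def classA_def
  proof (intro CollectI conjI ballI impI)
    show "f0 holomorphic_on ball 0 1" by (rule holf0)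
    show "f0 0 = 0" by (rule f00)
    show "deriv f0 0 = 1" using df0'[of 0] G00 by simp
    fix z :: complex assume z: "z \<in> ball 0 1" and znz: "z \<noteq> 0"
    show "f0 z \<noteq> 0" using znz G0nz by (simp add: f0_def)
    have z1: "1 - z \<noteq> 0" using z by auto
    have q: "z * deriv f0 z / f0 z = 1 + 2 * b * z / (1 - z)"
    proof -
      have "f0 z = z * G0 z" by (simp add: f0_def)
      then show ?thesis
        using znz G0nz[of z] z1 by (simp only: df0'[OF z]) (simp add: field_simps)
    qed
    have "exp (\<i> * of_real \<alpha>) * z * deriv f0 z / f0 z
        = exp (\<i> * of_real \<alpha>) + of_real c * ((1 + z) / (1 - z) - 1)"
    proof -
      have "exp (\<i> * of_real \<alpha>) * z * deriv f0 z / f0 z = exp (\<i> * of_real \<alpha>) * (z * deriv f0 z / f0 z)"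
        by (simp only: times_divide_eq_right mult.assoc)
      also have "\<dots> = exp (\<i> * of_real \<alpha>) * (1 + 2 * b * z / (1 - z))" by (simp only: q)
      also have "\<dots> = exp (\<i> * of_real \<alpha>) + of_real c * ((1 + z) / (1 - z) - 1)"
        using z1 by (simp add: eia[symmetric] field_simps)
      finally show ?thesis .
    qed
    note E = this
    have ReE: "Re (exp (\<i> * of_real \<alpha>)) = cos \<alpha>"
      by (simp add: exp_Euler cos_of_real sin_of_real)
    have X: "Re ((1 + z) / (1 - z)) > 0" using Re_frac_pos z by simp
    have R: "Re (exp (\<i> * of_real \<alpha>) * z * deriv f0 z / f0 z)
        = cos \<alpha> + c * (Re ((1 + z) / (1 - z)) - 1)"
      by (simp only: E) (simp add: ReE)
    have "0 < c * Re ((1 + z) / (1 - z))" using c0 X by simp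
    then show "Re (exp (\<i> * of_real \<alpha>) * z * deriv f0 z / f0 z) > lam * cos \<alpha>"
      unfolding R by (simp add: c_def algebra_simps)
  qed
  fix r :: real assume r0: "0 \<le> r" and r1: "r < 1"
  have rb: "complex_of_real r \<in> ball 0 1" using r0 r1 by simp
  have "deriv (deriv (alexander f0)) (of_real r) / deriv (alexander f0) (of_real r)
      = 2 * b / (1 - of_real r)"
  proof -
    have "deriv (alexander f0) (of_real r) = G0 (of_real r)"
      using alex_basic(2)[OF holf0 f00 rb] fun_cong[OF GG, of "of_real r"] by simp
    moreover have "deriv (deriv (alexander f0)) (of_real r) = deriv G0 (of_real r)"
      using alex_basic(3)[OF holf0 f00 rb] GG by simp
    ultimately show ?thesis
      using G0nz[of "of_real r"] by (simp add: dG0'[OF rb])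
  qed
  moreover have "cmod b = c" using c0 by (simp add: b_def norm_mult)
  moreover have "cmod (1 - complex_of_real r) = 1 - r"
    using r1 by (metis norm_of_real of_real_1 of_real_diff abs_of_pos diff_gt_0_iff_gt)
  ultimately have "cmod (deriv (deriv (alexander f0)) (of_real r) / deriv (alexander f0) (of_real r))
      = 2 * c / (1 - r)" by (simp add: norm_divide norm_mult)
  moreover have "(1 - (cmod (complex_of_real r))^2) * (2 * c / (1 - r)) = 2 * c * (1 + r)"
    using r0 r1 by (simp add: power2_eq_square field_simps)
  ultimately show "(1 - (cmod (complex_of_real r))^2) *
        cmod (deriv (deriv (alexander f0)) (of_real r) / deriv (alexander f0) (of_real r))
      = 2 * c * (1 + r)"
    by simp
qed


lemma upper_norm:
  assumes f: "f \<in> spirallike \<alpha> lam"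
    and a1: "- (pi / 2) < \<alpha>" and a2: "\<alpha> < pi / 2" and l1: "lam < 1"
  shows "preschwarzian_norm (alexander f) \<le> ereal (4 * (1 - lam) * cos \<alpha>)"
  unfolding preschwarzian_norm_def
proof (rule SUP_least)
  fix z :: complex assume z: "z \<in> ball 0 1"
  have holf: "f holomorphic_on ball 0 1" and f0: "f 0 = 0"
    using f unfolding spirallike_def classA_def by auto
  show "ereal ((1 - (cmod z)^2) * cmod (deriv (deriv (alexander f)) z / deriv (alexander f) z))
        \<le> ereal (4 * (1 - lam) * cos \<alpha>)"
    using upper_pointwise[OF f a1 a2 l1 z] alex_basic(2,3)[OF holf f0 z] by simp
qed

theorem theorem3p2:
  fixes \<alpha> lam :: real
  assumes "- (pi / 2) < \<alpha>" and "\<alpha> < pi / 2" and "lam < 1"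
  shows "(\<forall>f \<in> spirallike \<alpha> lam.
            preschwarzian_norm (alexander f) \<le> ereal (4 * (1 - lam) * cos \<alpha>)) \<and>
         (\<exists>f \<in> spirallike \<alpha> lam.
            preschwarzian_norm (alexander f) = ereal (4 * (1 - lam) * cos \<alpha>))"
proof (intro conjI ballI)
  fix f assume "f \<in> spirallike \<alpha> lam"
  then show "preschwarzian_norm (alexander f) \<le> ereal (4 * (1 - lam) * cos \<alpha>)"
    using upper_norm assms by blast
next
  define c where "c = (1 - lam) * cos \<alpha>"
  define b where "b = exp (- (\<i> * of_real \<alpha>)) * of_real c"
  define f0 where "f0 = (\<lambda>z. z * exp (- 2 * b * ln (1 - z)))"
  have cpos: "cos \<alpha> > 0" using assms by (intro cos_gt_zero_pi) auto
  have c0: "c > 0" using cpos assms by (simp add: c_def)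
  have sp: "f0 \<in> spirallike \<alpha> lam"
    and val: "\<And>r. 0 \<le> r \<Longrightarrow> r < 1 \<Longrightarrow>
      (1 - (cmod (complex_of_real r))^2) *
        cmod (deriv (deriv (alexander f0)) (of_real r) / deriv (alexander f0) (of_real r))
      = 2 * c * (1 + r)"
    using extremal[OF assms] unfolding f0_def b_def c_def by auto
  define S where "S = preschwarzian_norm (alexander f0)"
  have le: "S \<le> ereal (4 * c)"
  proof -
    have "4 * (1 - lam) * cos \<alpha> = 4 * c" by (simp add: c_def)
    then show ?thesis using upper_norm[OF sp assms] by (simp add: S_def)
  qed
  have ge: "ereal (2 * c * (1 + r)) \<le> S" if "0 \<le> r" "r < 1" for r
  proof -
    have "complex_of_real r \<in> ball 0 1" using that by simp
    then have "ereal ((1 - (cmod (complex_of_real r))^2) *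
        cmod (deriv (deriv (alexander f0)) (of_real r) / deriv (alexander f0) (of_real r))) \<le> S"
      unfolding S_def preschwarzian_norm_def by (rule SUP_upper)
    then show ?thesis using val[OF that] by simp
  qed
  have "ereal (4 * c) \<le> S"
  proof (rule ccontr)
    assume "\<not> ereal (4 * c) \<le> S"
    then have lt: "S < ereal (4 * c)" by simp
    have "ereal (2 * c) \<le> S" using ge[of 0] by simp
    with lt obtain s where s: "S = ereal s" by (cases S) auto
    have s1: "s < 4 * c" "2 * c \<le> s" using lt \<open>ereal (2 * c) \<le> S\<close> s by auto
    define r where "r = s / (4 * c)"
    have r0: "0 \<le> r" "r < 1" using s1 c0 by (auto simp: r_def field_simps)
    have "2 * c * (1 + r) \<le> s" using ge[OF r0] s by simp
    moreover have "2 * c * (1 + r) = 2 * c + s / 2" using c0 by (simp add: r_def field_simps)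
    ultimately show False using s1 by simp
  qed
  with le have "S = ereal (4 * c)" by simp
  then show "\<exists>f \<in> spirallike \<alpha> lam.
            preschwarzian_norm (alexander f) = ereal (4 * (1 - lam) * cos \<alpha>)"
  proof -
    have "4 * (1 - lam) * cos \<alpha> = 4 * c" by (simp add: c_def)
    then show ?thesis using sp \<open>S = ereal (4 * c)\<close> unfolding S_def by auto
  qed
qed

end
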